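(* Let $R=k\{x_1,\ldots,x_n;\,Q,\preceq\}$ be a PBW algebra and use TOP on both $R^s$ (built from $\preceq$) and $(R^{\rm env})^s$ (built from the chosen order on $\mathbb{N}^{2n}$), or POT on both. (a) If the order on $R^{\rm env}$ is $\preceq^*$ or $\preceq^c$ and $\mathbf h\in(R^{\rm env})^s$ satisfies $\exp(\mathbf h)=((\alpha,0),i)\in\mathbb{N}^{2n,(s)}$, then $\mathbf h\notin\mathrm{Ker}(\mathfrak m^s)$ and $\exp(\mathfrak m^s(\mathbf h))=(\alpha,i)$. (b) If the order on $R^{\rm env}$ is $\preceq_*$ or $\preceq_c$ and $\exp(\mathbf h)=((0,\alpha),i)$, then $\mathbf h\notin\mathrm{Ker}(\mathfrak m^s)$ and $\exp(\mathfrak m^s(\mathbf h))=(\alpha^{\rm op},i)$.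
   Context: $k$ is a field; $x^\alpha=x_1^{\alpha_1}\cdots x_n^{\alpha_n}$. A PBW algebra $R=k\{x_1,\ldots,x_n;Q,\preceq\}$ is a quotient of $k\langle x_1,\ldots,x_n\rangle$ by the two-sided ideal generated by $Q=\{x_jx_i-q_{ji}x_ix_j-p_{ji};\,i<j\}$, $q_{ji}\in k^*$, each $p_{ji}$ a combination of standard monomials with exponents $\prec\epsilon_i+\epsilon_j$ for an admissible order $\preceq$ (total, compatible with addition, $0$ minimal), such that the standard monomials form a $k$-basis. $R^{\rm env}=R\otimes_kR^{\rm op}$ is regarded as the PBW algebra in the variables $x_1\otimes1,\ldots,x_n\otimes1,1\otimes x_n,\ldots,1\otimes x_1$ (in this order); the exponent $(\alpha,\beta)\in\mathbb N^{2n}$ corresponds to the monomial $x^\alpha\otimes x^{\beta^{\rm op}}$, where $\beta^{\rm op}=(\beta_n,\ldots,\beta_1)$. Let $\alpha\preceq^{\rm op}\beta$ iff $\alpha^{\rm op}\preceq\beta^{\rm op}$. Orders on $\mathbb N^{2n}$: $(\alpha,\beta)\prec^*(\gamma,\delta)$ iff $\beta\prec^{\rm op}\delta$, or $\beta=\delta$ and $\alpha\prec\gamma$; $(\alpha,\beta)\prec_*(\gamma,\delta)$ iff $\alpha\prec\gamma$, or $\alpha=\gamma$ and $\beta\prec^{\rm op}\delta$; $(\alpha,\beta)\prec^c(\gamma,\delta)$ iff $\alpha+\beta^{\rm op}\prec\gamma+\delta^{\rm op}$, or equality and $\beta^{\rm op}\prec\delta^{\rm op}$; $(\alpha,\beta)\prec_c(\gamma,\delta)$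 iff $\alpha+\beta^{\rm op}\prec\gamma+\delta^{\rm op}$, or equality and $\alpha\prec\gamma$. For an admissible order $\le$ on $\mathbb N^m$, $\mathbb N^{m,(s)}=\mathbb N^m\times\{1,\ldots,s\}$ carries TOP: $(\alpha,i)<(\beta,j)$ iff $\alpha<\beta$, or $\alpha=\beta$ and $i>j$; and POT: $(\alpha,i)<(\beta,j)$ iff $i>j$, or $i=j$ and $\alpha<\beta$. A nonzero element of $A^s$ ($A=R$ or $R^{\rm env}$, basis $\mathbf e_i$) is uniquely $\sum c_{(\alpha,i)}x^\alpha\mathbf e_i$, and $\exp$ is the largest $(\alpha,i)$ with $c_{(\alpha,i)}\ne0$. $\mathfrak m^s:(R^{\rm env})^s\to R^s$ applies $\mathfrak m(r\otimes r')=rr'$ coordinatewise. *)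

theory Defs
  imports Complex_Main "HOL-Library.Function_Algebras"
begin

(* Exponents in N^n: functions nat => nat vanishing at indices >= n
   (index i stands for variable x_(i+1)). *)
definition expset :: "nat \<Rightarrow> (nat \<Rightarrow> nat) set" where
  "expset n = {\<alpha>. \<forall>i\<ge>n. \<alpha> i = 0}"

definition unitv :: "nat \<Rightarrow> nat \<Rightarrow> nat" where
  "unitv i = (\<lambda>j. if j = i then 1 else 0)"

definition opx :: "nat \<Rightarrow> (nat \<Rightarrow> nat) \<Rightarrow> (nat \<Rightarrow> nat)" where
  "opx n \<alpha> = (\<lambda>i. if i < n then \<alpha> (n - 1 - i) else 0)"

definition admissible :: "nat \<Rightarrow> ((nat \<Rightarrow> nat) \<Rightarrow> (nat \<Rightarrow> nat) \<Rightarrow> bool) \<Rightarrow> bool" where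
  "admissible n prec \<longleftrightarrow>
     (\<forall>a\<in>expset n. \<not> prec a a) \<and>
     (\<forall>a\<in>expset n. \<forall>b\<in>expset n. \<forall>c\<in>expset n. prec a b \<longrightarrow> prec b c \<longrightarrow> prec a c) \<and>
     (\<forall>a\<in>expset n. \<forall>b\<in>expset n. prec a b \<or> a = b \<or> prec b a) \<and>
     (\<forall>a\<in>expset n. \<forall>b\<in>expset n. \<forall>c\<in>expset n. prec a b \<longrightarrow> prec (a + c) (b + c)) \<and>
     (\<forall>a\<in>expset n. \<not> prec a 0)"

definition smono :: "nat \<Rightarrow> (nat \<Rightarrow> 'r::monoid_mult) \<Rightarrow> (nat \<Rightarrow> nat) \<Rightarrow> 'r" where
  "smono n x \<alpha> = prod_list (map (\<lambda>i. x i ^ \<alpha> i) [0..<n])"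

(* This characterizes R up to isomorphism as the quotient k<x>/<Q>. *)
definition pbw_algebra :: "('k::field \<Rightarrow> 'r::ring_1 \<Rightarrow> 'r) \<Rightarrow> nat \<Rightarrow> (nat \<Rightarrow> 'r)
     \<Rightarrow> ((nat \<Rightarrow> nat) \<Rightarrow> (nat \<Rightarrow> nat) \<Rightarrow> bool) \<Rightarrow> bool" where
  "pbw_algebra scale n x prec \<longleftrightarrow>
     vector_space scale \<and>
     (\<forall>c a b. scale c (a * b) = scale c a * b \<and> scale c (a * b) = a * scale c b) \<and>
     admissible n prec \<and>
     (\<forall>i j. i < j \<and> j < n \<longrightarrow>
        (\<exists>q p. q \<noteq> 0 \<and>
           p \<in> module.span scale (smono n x ` {\<gamma>\<in>expset n. prec \<gamma> (unitv i + unitv j)}) \<and>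
           x j * x i = scale q (x i * x j) + p)) \<and>
     inj_on (smono n x) (expset n) \<and>
     \<not> module.dependent scale (smono n x ` expset n) \<and>
     module.span scale (smono n x ` expset n) = UNIV"

definition coeffR :: "('k::field \<Rightarrow> 'r::ring_1 \<Rightarrow> 'r) \<Rightarrow> nat \<Rightarrow> (nat \<Rightarrow> 'r)
     \<Rightarrow> 'r \<Rightarrow> (nat \<Rightarrow> nat) \<Rightarrow> 'k" where
  "coeffR scale n x r \<alpha> = module.representation scale (smono n x ` expset n) r (smono n x \<alpha>)"

definition max_wrt :: "('a \<Rightarrow> 'a \<Rightarrow> bool) \<Rightarrow> 'a set \<Rightarrow> 'a" where
  "max_wrt lt S = (THE m. m \<in> S \<and> (\<forall>y\<in>S. y \<noteq> m \<longrightarrow> lt y m))"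

definition top_ord :: "('a \<Rightarrow> 'a \<Rightarrow> bool) \<Rightarrow> 'a \<times> nat \<Rightarrow> 'a \<times> nat \<Rightarrow> bool" where
  "top_ord lt p q \<longleftrightarrow> lt (fst p) (fst q) \<or> (fst p = fst q \<and> snd p > snd q)"

definition pot_ord :: "('a \<Rightarrow> 'a \<Rightarrow> bool) \<Rightarrow> 'a \<times> nat \<Rightarrow> 'a \<times> nat \<Rightarrow> bool" where
  "pot_ord lt p q \<longleftrightarrow> snd p > snd q \<or> (snd p = snd q \<and> lt (fst p) (fst q))"

definition mod_ord :: "bool \<Rightarrow> ('a \<Rightarrow> 'a \<Rightarrow> bool) \<Rightarrow> 'a \<times> nat \<Rightarrow> 'a \<times> nat \<Rightarrow> bool" where
  "mod_ord use_top lt = (if use_top then top_ord lt else pot_ord lt)"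

definition op_ord :: "nat \<Rightarrow> ((nat \<Rightarrow> nat) \<Rightarrow> (nat \<Rightarrow> nat) \<Rightarrow> bool) \<Rightarrow> (nat \<Rightarrow> nat) \<Rightarrow> (nat \<Rightarrow> nat) \<Rightarrow> bool" where
  "op_ord n prec a b \<longleftrightarrow> prec (opx n a) (opx n b)"

type_synonym exp2 = "(nat \<Rightarrow> nat) \<times> (nat \<Rightarrow> nat)"

definition ord_upper_star :: "nat \<Rightarrow> ((nat \<Rightarrow> nat) \<Rightarrow> (nat \<Rightarrow> nat) \<Rightarrow> bool) \<Rightarrow> exp2 \<Rightarrow> exp2 \<Rightarrow> bool" where
  "ord_upper_star n prec p q \<longleftrightarrow>
     op_ord n prec (snd p) (snd q) \<or> (snd p = snd q \<and> prec (fst p) (fst q))"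

definition ord_lower_star :: "nat \<Rightarrow> ((nat \<Rightarrow> nat) \<Rightarrow> (nat \<Rightarrow> nat) \<Rightarrow> bool) \<Rightarrow> exp2 \<Rightarrow> exp2 \<Rightarrow> bool" where
  "ord_lower_star n prec p q \<longleftrightarrow>
     prec (fst p) (fst q) \<or> (fst p = fst q \<and> op_ord n prec (snd p) (snd q))"

definition ord_upper_c :: "nat \<Rightarrow> ((nat \<Rightarrow> nat) \<Rightarrow> (nat \<Rightarrow> nat) \<Rightarrow> bool) \<Rightarrow> exp2 \<Rightarrow> exp2 \<Rightarrow> bool" where
  "ord_upper_c n prec p q \<longleftrightarrow>
     prec (fst p + opx n (snd p)) (fst q + opx n (snd q)) \<or>
     (fst p + opx n (snd p) = fst q + opx n (snd q) \<and> prec (opx n (snd p)) (opx n (snd q)))"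

definition ord_lower_c :: "nat \<Rightarrow> ((nat \<Rightarrow> nat) \<Rightarrow> (nat \<Rightarrow> nat) \<Rightarrow> bool) \<Rightarrow> exp2 \<Rightarrow> exp2 \<Rightarrow> bool" where
  "ord_lower_c n prec p q \<longleftrightarrow>
     prec (fst p + opx n (snd p)) (fst q + opx n (snd q)) \<or>
     (fst p + opx n (snd p) = fst q + opx n (snd q) \<and> prec (fst p) (fst q))"

(* Elements of (R^env)^s, R^env = R (x) R^op, written in the PBW basis of R^env:
   h((alpha,beta),i) is the coefficient of (x^alpha (x) x^(beta^op)) e_i. *)
definition env_vec :: "nat \<Rightarrow> nat \<Rightarrow> (exp2 \<times> nat \<Rightarrow> 'k::zero) \<Rightarrow> bool" where
  "env_vec n s h \<longleftrightarrow> finite {p. h p \<noteq> 0} \<and>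
     (\<forall>a b i. h ((a, b), i) \<noteq> 0 \<longrightarrow> a \<in> expset n \<and> b \<in> expset n \<and> i \<in> {1..s})"

definition exp_env :: "bool \<Rightarrow> (exp2 \<Rightarrow> exp2 \<Rightarrow> bool) \<Rightarrow> (exp2 \<times> nat \<Rightarrow> 'k::zero) \<Rightarrow> exp2 \<times> nat" where
  "exp_env use_top lt h = max_wrt (mod_ord use_top lt) {p. h p \<noteq> 0}"

definition mult_s :: "('k::field \<Rightarrow> 'r::ring_1 \<Rightarrow> 'r) \<Rightarrow> nat \<Rightarrow> (nat \<Rightarrow> 'r)
     \<Rightarrow> (exp2 \<times> nat \<Rightarrow> 'k) \<Rightarrow> nat \<Rightarrow> 'r" where
  "mult_s scale n x h i =
     (\<Sum>ab\<in>{ab. h (ab, i) \<noteq> 0}. scale (h (ab, i)) (smono n x (fst ab) * smono n x (opx n (snd ab))))"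

definition exp_R :: "bool \<Rightarrow> ('k::field \<Rightarrow> 'r::ring_1 \<Rightarrow> 'r) \<Rightarrow> nat \<Rightarrow> (nat \<Rightarrow> 'r)
     \<Rightarrow> ((nat \<Rightarrow> nat) \<Rightarrow> (nat \<Rightarrow> nat) \<Rightarrow> bool) \<Rightarrow> nat \<Rightarrow> (nat \<Rightarrow> 'r) \<Rightarrow> (nat \<Rightarrow> nat) \<times> nat" where
  "exp_R use_top scale n x prec s v = max_wrt (mod_ord use_top prec)
     {(\<alpha>, i). \<alpha> \<in> expset n \<and> i \<in> {1..s} \<and> coeffR scale n x (v i) \<alpha> \<noteq> 0}"

end

theory Submission
  imports Defs
begin


definition sto :: "('a \<Rightarrow> 'a \<Rightarrow> bool) \<Rightarrow> 'a set \<Rightarrow> bool" where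
  "sto lt A \<longleftrightarrow> (\<forall>a\<in>A. \<not> lt a a) \<and> (\<forall>a\<in>A. \<forall>b\<in>A. \<forall>c\<in>A. lt a b \<longrightarrow> lt b c \<longrightarrow> lt a c)
     \<and> (\<forall>a\<in>A. \<forall>b\<in>A. lt a b \<or> a = b \<or> lt b a)"

lemma sto_lex:
  fixes lt1 :: "'b \<Rightarrow> 'b \<Rightarrow> bool"
  assumes "sto lt1 A1" "sto lt2 A2" "f ` A \<subseteq> A1" "g ` A \<subseteq> A2"
    "\<forall>p\<in>A. \<forall>q\<in>A. f p = f q \<longrightarrow> g p = g q \<longrightarrow> p = q"
  shows "sto (\<lambda>p q. lt1 (f p) (f q) \<or> (f p = f q \<and> lt2 (g p) (g q))) A"
  unfolding sto_def
proof (intro conjI ballI impI)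
  fix a assume "a \<in> A"
  then show "\<not> (lt1 (f a) (f a) \<or> f a = f a \<and> lt2 (g a) (g a))"
    using assms(1-4) unfolding sto_def by blast
next
  fix a b c assume A: "a \<in> A" "b \<in> A" "c \<in> A"
    and ab: "lt1 (f a) (f b) \<or> f a = f b \<and> lt2 (g a) (g b)"
    and bc: "lt1 (f b) (f c) \<or> f b = f c \<and> lt2 (g b) (g c)"
  have 1: "f a \<in> A1" "f b \<in> A1" "f c \<in> A1" "g a \<in> A2" "g b \<in> A2" "g c \<in> A2"
    using A assms(3,4) by auto
  show "lt1 (f a) (f c) \<or> f a = f c \<and> lt2 (g a) (g c)"
    using ab bc 1 assms(1,2) unfolding sto_def by metis
next
  fix a b assume A: "a \<in> A" "b \<in> A"
  have 1: "f a \<in> A1" "f b \<in> A1" "g a \<in> A2" "g b \<in> A2"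
    using A assms(3,4) by auto
  show "(lt1 (f a) (f b) \<or> f a = f b \<and> lt2 (g a) (g b)) \<or> a = b \<or>
        (lt1 (f b) (f a) \<or> f b = f a \<and> lt2 (g b) (g a))"
    using 1 A assms(1,2,5) unfolding sto_def by metis
qed

lemma sto_inv:
  assumes "sto lt A1" "f ` A \<subseteq> A1" "inj_on f A"
  shows "sto (\<lambda>p q. lt (f p) (f q)) A"
  using assms unfolding sto_def image_subset_iff inj_on_def by blast

lemma sto_gt: "sto (\<lambda>a b::nat. a > b) UNIV"
  unfolding sto_def by auto

lemma sto_mod_ord:
  assumes "sto lt A" shows "sto (mod_ord t lt) (A \<times> UNIV)"
proof (cases t)
  case True
  have "sto (\<lambda>p q. lt (fst p) (fst q) \<or> (fst p = fst q \<and> (\<lambda>a b::nat. a > b) (snd p) (snd q))) (A \<times> UNIV)"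
    by (rule sto_lex[OF assms sto_gt]) (auto simp: prod_eq_iff)
  then show ?thesis using True unfolding mod_ord_def top_ord_def[abs_def] by simp
next
  case False
  have "sto (\<lambda>p q. (\<lambda>a b::nat. a > b) (snd p) (snd q) \<or> (snd p = snd q \<and> lt (fst p) (fst q))) (A \<times> UNIV)"
    by (rule sto_lex[OF sto_gt assms]) (auto simp: prod_eq_iff)
  then show ?thesis using False unfolding mod_ord_def pot_ord_def[abs_def] by simp
qed

lemma max_exists:
  assumes "finite S" "S \<noteq> {}" "sto lt A" "S \<subseteq> A"
  shows "\<exists>m\<in>S. \<forall>y\<in>S. y \<noteq> m \<longrightarrow> lt y m"
  using assms(1,2,4)
proof (induction S rule: finite_ne_induct)
  case (singleton x) then show ?case by auto
next
  case (insert a F)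
  then obtain m where m: "m \<in> F" "\<forall>y\<in>F. y \<noteq> m \<longrightarrow> lt y m" by auto
  have "a \<in> A" "m \<in> A" using insert m by auto
  then have "lt a m \<or> a = m \<or> lt m a" using assms(3) unfolding sto_def by blast
  then show ?case
  proof (elim disjE)
    assume "lt a m" then show ?thesis using m by auto
  next
    assume "a = m" then show ?thesis using insert m by auto
  next
    assume am: "lt m a"
    have "\<forall>y\<in>insert a F. y \<noteq> a \<longrightarrow> lt y a"
    proof (intro ballI impI)
      fix y assume "y \<in> insert a F" "y \<noteq> a"
      then have "y \<in> F" by auto
      then show "lt y a"
      proof (cases "y = m")
        case False
        then have "lt y m" using m \<open>y \<in> F\<close> by auto
        then show ?thesis using am assms(3) \<open>y\<in>F\<close> \<open>a \<in> A\<close> \<open>m \<in> A\<close> insert(5)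
          unfolding sto_def by blast
      qed (use am in auto)
    qed
    then show ?thesis by auto
  qed
qed

lemma max_wrt_eq:
  assumes "sto lt A" "S \<subseteq> A" "m \<in> S" "\<forall>y\<in>S. y \<noteq> m \<longrightarrow> lt y m"
  shows "max_wrt lt S = m"
  unfolding max_wrt_def
proof (rule the_equality)
  show "m \<in> S \<and> (\<forall>y\<in>S. y \<noteq> m \<longrightarrow> lt y m)" using assms by auto
  fix m' assume m': "m' \<in> S \<and> (\<forall>y\<in>S. y \<noteq> m' \<longrightarrow> lt y m')"
  show "m' = m"
  proof (rule ccontr)
    assume "m' \<noteq> m"
    then have "lt m' m" "lt m m'" using assms m' by auto
    then show False using assms m' unfolding sto_def by blast
  qed
qed

lemma max_wrt_prop:
  assumes "finite S" "S \<noteq> {}" "sto lt A" "S \<subseteq> A"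
  shows "max_wrt lt S \<in> S \<and> (\<forall>y\<in>S. y \<noteq> max_wrt lt S \<longrightarrow> lt y (max_wrt lt S))"
proof -
  obtain m where "m \<in> S" "\<forall>y\<in>S. y \<noteq> m \<longrightarrow> lt y m" using max_exists[OF assms] by auto
  moreover have "max_wrt lt S = m" using max_wrt_eq[OF assms(3,4)] calculation by auto
  ultimately show ?thesis by simp
qed

lemma expset_add: "a \<in> expset n \<Longrightarrow> b \<in> expset n \<Longrightarrow> a + b \<in> expset n"
  by (simp add: expset_def)

lemma expset_zero[simp]: "0 \<in> expset n"
  by (simp add: expset_def)

lemma opx_expset: "opx n a \<in> expset n"
  by (simp add: expset_def opx_def)

lemma opx_opx: "a \<in> expset n \<Longrightarrow> opx n (opx n a) = a"
  by (auto simp: expset_def opx_def fun_eq_iff)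

lemma opx_inj: "inj_on (opx n) (expset n)"
  unfolding inj_on_def by (metis opx_opx)

lemma opx_zero[simp]: "opx n 0 = 0"
  by (simp add: opx_def fun_eq_iff)

lemma adm_sto: "admissible n prec \<Longrightarrow> sto prec (expset n)"
  unfolding admissible_def sto_def by blast

lemma op_ord_sto: "admissible n prec \<Longrightarrow> sto (op_ord n prec) (expset n)"
proof -
  assume "admissible n prec"
  then have "sto (\<lambda>p q. prec (opx n p) (opx n q)) (expset n)"
    by (rule sto_inv[of prec "expset n" "opx n" "expset n", OF adm_sto])
      (auto simp: opx_expset opx_inj)
  then show ?thesis unfolding op_ord_def[abs_def] .
qed



lemma sto_upper_star: "admissible n prec \<Longrightarrow> sto (ord_upper_star n prec) (expset n \<times> expset n)"
proof -
  assume a: "admissible n prec"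
  have "sto (\<lambda>p q. op_ord n prec (snd p) (snd q) \<or> (snd p = snd q \<and> prec (fst p) (fst q))) (expset n \<times> expset n)"
    by (rule sto_lex[of "op_ord n prec" "expset n" prec "expset n" snd "expset n \<times> expset n" fst,
          OF op_ord_sto[OF a] adm_sto[OF a]]) (auto simp: prod_eq_iff)
  then show ?thesis unfolding ord_upper_star_def[abs_def] .
qed

lemma sto_lower_star: "admissible n prec \<Longrightarrow> sto (ord_lower_star n prec) (expset n \<times> expset n)"
proof -
  assume a: "admissible n prec"
  have "sto (\<lambda>p q. prec (fst p) (fst q) \<or> (fst p = fst q \<and> op_ord n prec (snd p) (snd q))) (expset n \<times> expset n)"
    by (rule sto_lex[of prec "expset n" "op_ord n prec" "expset n" fst "expset n \<times> expset n" snd,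
          OF adm_sto[OF a] op_ord_sto[OF a]]) (auto simp: prod_eq_iff)
  then show ?thesis unfolding ord_lower_star_def[abs_def] .
qed

lemma sto_upper_c: "admissible n prec \<Longrightarrow> sto (ord_upper_c n prec) (expset n \<times> expset n)"
proof -
  assume a: "admissible n prec"
  have "sto (\<lambda>p q. prec (fst p + opx n (snd p)) (fst q + opx n (snd q)) \<or>
     (fst p + opx n (snd p) = fst q + opx n (snd q) \<and> prec (opx n (snd p)) (opx n (snd q)))) (expset n \<times> expset n)"
  proof (rule sto_lex[of prec "expset n" prec "expset n" "\<lambda>p. fst p + opx n (snd p)" "expset n \<times> expset n" "\<lambda>p. opx n (snd p)",
          OF adm_sto[OF a] adm_sto[OF a]])
    show "(\<lambda>p. fst p + opx n (snd p)) ` (expset n \<times> expset n) \<subseteq> expset n"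
      by (auto intro!: expset_add opx_expset)
    show "(\<lambda>p. opx n (snd p)) ` (expset n \<times> expset n) \<subseteq> expset n"
      by (auto intro!: opx_expset)
    show "\<forall>p\<in>expset n \<times> expset n. \<forall>q\<in>expset n \<times> expset n.
       fst p + opx n (snd p) = fst q + opx n (snd q) \<longrightarrow> opx n (snd p) = opx n (snd q) \<longrightarrow> p = q"
      using opx_inj[of n] unfolding inj_on_def by (auto simp: prod_eq_iff)
  qed
  then show ?thesis unfolding ord_upper_c_def[abs_def] .
qed

lemma sto_lower_c: "admissible n prec \<Longrightarrow> sto (ord_lower_c n prec) (expset n \<times> expset n)"
proof -
  assume a: "admissible n prec"
  have "sto (\<lambda>p q. prec (fst p + opx n (snd p)) (fst q + opx n (snd q)) \<or>
     (fst p + opx n (snd p) = fst q + opx n (snd q) \<and> prec (fst p) (fst q))) (expset n \<times> expset n)"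
  proof (rule sto_lex[of prec "expset n" prec "expset n" "\<lambda>p. fst p + opx n (snd p)" "expset n \<times> expset n" "fst",
          OF adm_sto[OF a] adm_sto[OF a]])
    show "(\<lambda>p. fst p + opx n (snd p)) ` (expset n \<times> expset n) \<subseteq> expset n"
      by (auto intro!: expset_add opx_expset)
    show "fst ` (expset n \<times> expset n) \<subseteq> expset n"
      by auto
    show "\<forall>p\<in>expset n \<times> expset n. \<forall>q\<in>expset n \<times> expset n.
       fst p + opx n (snd p) = fst q + opx n (snd q) \<longrightarrow> fst p = fst q \<longrightarrow> p = q"
      using opx_inj[of n] unfolding inj_on_def by (auto simp: prod_eq_iff)
  qed
  then show ?thesis unfolding ord_lower_c_def[abs_def] .
qed

lemma adm_not0: "admissible n prec \<Longrightarrow> a \<in> expset n \<Longrightarrow> \<not> prec a 0"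
  unfolding admissible_def by blast

lemma key_upper_star:
  assumes "admissible n prec" "a \<in> expset n" "b \<in> expset n" "ord_upper_star n prec (a, b) (\<alpha>, 0)"
  shows "prec (a + opx n b) (\<alpha> + opx n 0)"
  using assms adm_not0[OF assms(1) opx_expset, of b] unfolding ord_upper_star_def op_ord_def by auto

lemma key_upper_c:
  assumes "admissible n prec" "a \<in> expset n" "b \<in> expset n" "ord_upper_c n prec (a, b) (\<alpha>, 0)"
  shows "prec (a + opx n b) (\<alpha> + opx n 0)"
  using assms adm_not0[OF assms(1) opx_expset, of b] unfolding ord_upper_c_def by auto

lemma key_lower_star:
  assumes "admissible n prec" "a \<in> expset n" "b \<in> expset n" "ord_lower_star n prec (a, b) (0, \<alpha>)"
  shows "prec (a + opx n b) (0 + opx n \<alpha>)"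
  using assms adm_not0[OF assms(1) assms(2)] unfolding ord_lower_star_def op_ord_def by auto

lemma key_lower_c:
  assumes "admissible n prec" "a \<in> expset n" "b \<in> expset n" "ord_lower_c n prec (a, b) (0, \<alpha>)"
  shows "prec (a + opx n b) (0 + opx n \<alpha>)"
  using assms adm_not0[OF assms(1) assms(2)] unfolding ord_lower_c_def by auto

lemma le_prec:
  assumes ad: "admissible n prec" and ab: "a \<in> expset n" "b \<in> expset n" "a \<le> b"
  shows "a = b \<or> prec a b"
proof -
  define d where "d = b - a"
  have d: "d \<in> expset n" using ab unfolding d_def expset_def by auto
  have bd: "b = d + a" using ab unfolding d_def by (auto simp: le_fun_def fun_eq_iff)
  show ?thesis
  proof (cases "d = 0")
    case True then show ?thesis using bd by simp
  next
    case False
    then have "prec 0 d" using ad d unfolding admissible_def by (metis expset_zero)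
    then have "prec (0 + a) (d + a)" using ad d ab unfolding admissible_def by (metis expset_zero)
    then show ?thesis using bd by simp
  qed
qed

lemma nat_subseq:
  fixes s :: "nat \<Rightarrow> nat"
  shows "\<exists>f::nat\<Rightarrow>nat. strict_mono f \<and> (\<forall>m k. m \<le> k \<longrightarrow> s (f m) \<le> s (f k))"
proof -
  obtain g :: "nat \<Rightarrow> nat" where g: "strict_mono g" "monoseq (\<lambda>k. s (g k))" using seq_monosub[of s] by blast
  show ?thesis
  proof (cases "incseq (\<lambda>k. s (g k))")
    case True then show ?thesis using g unfolding incseq_def by blast
  next
    case False
    then have dec: "decseq (\<lambda>k. s (g k))" using g monoseq_iff by blast
    obtain k0 where k0: "\<forall>y. s (g k0) \<le> s (g y)"
      using ex_has_least_nat[of "\<lambda>_. True" 0 "\<lambda>k. s (g k)"] by auto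
    have sm: "strict_mono (\<lambda>k. g (k + k0))" using g(1) unfolding strict_mono_def by auto
    have "\<forall>m k. m \<le> k \<longrightarrow> s (g (m + k0)) \<le> s (g (k + k0))"
    proof (intro allI impI)
      fix m k :: nat assume "m \<le> k"
      have "s (g (m + k0)) \<le> s (g k0)" using dec unfolding decseq_def by auto
      also have "\<dots> \<le> s (g (k + k0))" using k0 by auto
      finally show "s (g (m + k0)) \<le> s (g (k + k0))" .
    qed
    then show ?thesis using sm by blast
  qed
qed

lemma dickson: "\<exists>f::nat\<Rightarrow>nat. strict_mono f \<and> (\<forall>j<N. \<forall>m k. m \<le> k \<longrightarrow> (a :: nat \<Rightarrow> nat \<Rightarrow> nat) (f m) j \<le> a (f k) j)"
proof (induction N)
  case 0
  have "strict_mono (id::nat\<Rightarrow>nat)" by (simp add: strict_mono_def)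
  then show ?case by blast
next
  case (Suc N)
  then obtain f :: "nat \<Rightarrow> nat" where f: "strict_mono f" "\<forall>j<N. \<forall>m k. m \<le> k \<longrightarrow> a (f m) j \<le> a (f k) j" by blast
  obtain g :: "nat \<Rightarrow> nat" where g: "strict_mono g" "\<forall>m k. m \<le> k \<longrightarrow> a (f (g m)) N \<le> a (f (g k)) N"
    using nat_subseq[of "\<lambda>m. a (f m) N"] by blast
  have "strict_mono (f \<circ> g)" using f g strict_mono_o by blast
  moreover have "\<forall>j<Suc N. \<forall>m k. m \<le> k \<longrightarrow> a ((f \<circ> g) m) j \<le> a ((f \<circ> g) k) j"
  proof (intro allI impI)
    fix j m k :: nat assume "j < Suc N" "m \<le> k"
    then have "g m \<le> g k" using g(1) strict_mono_less_eq by blast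
    then show "a ((f \<circ> g) m) j \<le> a ((f \<circ> g) k) j"
      using \<open>j < Suc N\<close> \<open>m \<le> k\<close> f g by (cases "j = N") auto
  qed
  ultimately show ?case by blast
qed

lemma adm_wf:
  assumes ad: "admissible n prec"
  shows "wf {(a, b). a \<in> expset n \<and> b \<in> expset n \<and> prec a b}"
proof -
  have st: "sto prec (expset n)" using adm_sto[OF ad] .
  {
    fix f assume ch: "\<forall>i. (f (Suc i), f i) \<in> {(a, b). a \<in> expset n \<and> b \<in> expset n \<and> prec a b}"
    then have fe: "\<And>i. f i \<in> expset n" by blast
    have desc: "i < j \<Longrightarrow> prec (f j) (f i)" for i j
    proof (induction j)
      case 0 then show ?case by simp
    next
      case (Suc j)
      have 1: "prec (f (Suc j)) (f j)" using ch by blast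
      show ?case
      proof (cases "i = j")
        case True then show ?thesis using 1 by simp
      next
        case False
        then have "prec (f j) (f i)" using Suc by auto
        then show ?thesis using 1 st fe unfolding sto_def by blast
      qed
    qed
    obtain d :: "nat \<Rightarrow> nat" where d: "strict_mono d" "\<forall>j<n. \<forall>m k. m \<le> k \<longrightarrow> f (d m) j \<le> f (d k) j"
      using dickson[of n f] by blast
    have lt: "d 0 < d 1" using d(1) unfolding strict_mono_def by simp
    have "f (d 0) \<le> f (d 1)"
      unfolding le_fun_def
    proof
      fix j show "f (d 0) j \<le> f (d 1) j"
      proof (cases "j < n")
        case True then show ?thesis using d(2) by auto
      next
        case False then show ?thesis using fe[of "d 0"] unfolding expset_def by auto
      qed
    qed
    then have "f (d 0) = f (d 1) \<or> prec (f (d 0)) (f (d 1))" using le_prec[OF ad fe fe] by blast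
    moreover have "prec (f (d 1)) (f (d 0))" using desc[OF lt] .
    ultimately have False using st fe unfolding sto_def by metis
  }
  then show ?thesis unfolding wf_iff_no_infinite_down_chain by blast
qed



definition ek :: "nat \<Rightarrow> nat \<Rightarrow> nat \<Rightarrow> nat" where
  "ek i m = (\<lambda>j. if j = i then m else 0)"

lemma ek_expset: "i < n \<Longrightarrow> ek i m \<in> expset n"
  by (simp add: ek_def expset_def)

lemma unitv_ek: "unitv i = ek i 1"
  by (auto simp: unitv_def ek_def fun_eq_iff)

lemma sum_list_ek_expset: "set L \<subseteq> {..<n} \<Longrightarrow> sum_list (map (\<lambda>k. ek k (a k)) L) \<in> expset n"
  by (induction L) (auto intro!: expset_add ek_expset)

lemma sum_list_ek_upt: "sum_list (map (\<lambda>k. ek k (a k)) [0..<m]) = (\<lambda>j. if j < m then a j else 0)"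
  by (induction m) (auto simp: ek_def fun_eq_iff)

lemma prod_list_one: "(\<forall>y\<in>set L. f y = (1::'a::monoid_mult)) \<Longrightarrow> prod_list (map f L) = 1"
  by (induction L) auto

locale pbwl =
  fixes scale :: "'k::field \<Rightarrow> 'r::ring_1 \<Rightarrow> 'r" and n :: nat and x :: "nat \<Rightarrow> 'r"
    and prec :: "(nat \<Rightarrow> nat) \<Rightarrow> (nat \<Rightarrow> nat) \<Rightarrow> bool"
  assumes pbw: "pbw_algebra scale n x prec"
begin

sublocale vs: vector_space scale using pbw unfolding pbw_algebra_def by blast

lemma adm: "admissible n prec" using pbw by (simp add: pbw_algebra_def)
lemma st: "sto prec (expset n)" using adm_sto[OF adm] .

lemma scale_ml: "scale c (a * b) = scale c a * b" using pbw unfolding pbw_algebra_def by blast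
lemma scale_mr: "scale c (a * b) = a * scale c b" using pbw unfolding pbw_algebra_def by blast

lemma rel: "i < j \<Longrightarrow> j < n \<Longrightarrow> \<exists>q p. q \<noteq> 0 \<and>
           p \<in> vs.span (smono n x ` {\<gamma>\<in>expset n. prec \<gamma> (unitv i + unitv j)}) \<and>
           x j * x i = scale q (x i * x j) + p"
  using pbw unfolding pbw_algebra_def by blast

lemma smono_inj: "inj_on (smono n x) (expset n)" using pbw by (simp add: pbw_algebra_def)
lemma indep: "vs.independent (smono n x ` expset n)" using pbw by (simp add: pbw_algebra_def)
lemma spanU: "vs.span (smono n x ` expset n) = UNIV" using pbw by (simp add: pbw_algebra_def)

lemma trans: "a \<in> expset n \<Longrightarrow> b \<in> expset n \<Longrightarrow> c \<in> expset n \<Longrightarrow> prec a b \<Longrightarrow> prec b c \<Longrightarrow> prec a c"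
  using st unfolding sto_def by blast
lemma irrefl: "a \<in> expset n \<Longrightarrow> \<not> prec a a"
  using st unfolding sto_def by blast
lemma compat: "a \<in> expset n \<Longrightarrow> b \<in> expset n \<Longrightarrow> c \<in> expset n \<Longrightarrow> prec a b \<Longrightarrow> prec (c + a) (c + b)"
  using adm unfolding admissible_def by (metis add.commute)

definition F :: "(nat \<Rightarrow> nat) \<Rightarrow> 'r set" where
  "F \<gamma> = vs.span (smono n x ` {\<delta> \<in> expset n. \<delta> = \<gamma> \<or> prec \<delta> \<gamma>})"

lemma F_base: "\<delta> \<in> expset n \<Longrightarrow> smono n x \<delta> \<in> F \<delta>"
  unfolding F_def by (rule vs.span_base) auto

lemma F_mono: "\<gamma> \<in> expset n \<Longrightarrow> \<gamma>' \<in> expset n \<Longrightarrow> \<gamma> = \<gamma>' \<or> prec \<gamma> \<gamma>' \<Longrightarrow> F \<gamma> \<subseteq> F \<gamma>'"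
  unfolding F_def by (rule vs.span_mono) (use trans in blast)

lemma span_lmul:
  assumes "r \<in> vs.span S" "\<forall>s\<in>S. y * s \<in> vs.span T"
  shows "y * r \<in> vs.span T"
  using assms(1)
proof (induction rule: vs.span_induct_alt)
  case base then show ?case by (simp add: vs.span_zero)
next
  case (step c s r)
  have "y * (scale c s + r) = scale c (y * s) + y * r"
    by (simp add: distrib_left scale_mr)
  then show ?case using step assms(2) by (simp add: vs.span_add vs.span_scale)
qed

lemma span_rmul:
  assumes "r \<in> vs.span S" "\<forall>s\<in>S. s * y \<in> vs.span T"
  shows "r * y \<in> vs.span T"
  using assms(1)
proof (induction rule: vs.span_induct_alt)
  case base then show ?case by (simp add: vs.span_zero)
next
  case (step c s r)
  have "(scale c s + r) * y = scale c (s * y) + r * y"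
    by (simp add: distrib_right scale_ml)
  then show ?case using step assms(2) by (simp add: vs.span_add vs.span_scale)
qed

lemma smono_insert:
  assumes "i < n" "\<forall>k<i. \<beta> k = 0"
  shows "x i * smono n x \<beta> = smono n x (unitv i + \<beta>)"
proof -
  have u: "[0..<n] = [0..<i] @ i # [Suc i..<n]"
    using assms(1) by (metis le0 upt_add_eq_append upt_conv_Cons add_0 le_add_diff_inverse less_imp_le)
  have p1: "prod_list (map (\<lambda>k. x k ^ \<beta> k) [0..<i]) = 1"
    by (rule prod_list_one) (use assms(2) in auto)
  have p2: "prod_list (map (\<lambda>k. x k ^ (unitv i + \<beta>) k) [0..<i]) = 1"
    by (rule prod_list_one) (use assms(2) in \<open>auto simp: unitv_def\<close>)
  have p3: "map (\<lambda>k. x k ^ (unitv i + \<beta>) k) [Suc i..<n] = map (\<lambda>k. x k ^ \<beta> k) [Suc i..<n]"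
    by (auto simp: unitv_def)
  have m: "x i ^ (unitv i + \<beta>) i = x i * x i ^ \<beta> i" by (simp add: unitv_def)
  show ?thesis unfolding smono_def u map_append prod_list.append list.map prod_list.Cons p1 p2 p3 m
    by (simp add: mult.assoc)
qed

definition Hyp :: "(nat \<Rightarrow> nat) \<Rightarrow> bool" where
  "Hyp \<Theta> \<longleftrightarrow> (\<forall>k \<gamma>. k < n \<longrightarrow> \<gamma> \<in> expset n \<longrightarrow> (unitv k + \<gamma> = \<Theta> \<or> prec (unitv k + \<gamma>) \<Theta>) \<longrightarrow>
      x k * smono n x \<gamma> \<in> F (unitv k + \<gamma>))"

lemma unitv_expset: "k < n \<Longrightarrow> unitv k \<in> expset n"
  by (simp add: unitv_def expset_def)

lemma leq_trans: "a \<in> expset n \<Longrightarrow> b \<in> expset n \<Longrightarrow> c \<in> expset n \<Longrightarrow> a = b \<or> prec a b \<Longrightarrow> b = c \<or> prec b c \<Longrightarrow> a = c \<or> prec a c"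
  using trans by blast

lemma leq_compat: "a \<in> expset n \<Longrightarrow> b \<in> expset n \<Longrightarrow> c \<in> expset n \<Longrightarrow> a = b \<or> prec a b \<Longrightarrow> c + a = c + b \<or> prec (c + a) (c + b)"
  using compat by blast

lemma xmul:
  assumes H: "Hyp \<Theta>" and r: "r \<in> F c" and c: "c \<in> expset n" and k: "k < n" and T: "\<Theta> \<in> expset n"
    and b: "unitv k + c = \<Theta> \<or> prec (unitv k + c) \<Theta>"
  shows "x k * r \<in> F (unitv k + c)"
proof -
  have uk: "unitv k \<in> expset n" using k by (rule unitv_expset)
  have r': "r \<in> vs.span (smono n x ` {\<delta> \<in> expset n. \<delta> = c \<or> prec \<delta> c})" using r unfolding F_def .
  have "\<forall>s\<in>smono n x ` {\<delta> \<in> expset n. \<delta> = c \<or> prec \<delta> c}. x k * s \<in> F (unitv k + c)"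
  proof
    fix s assume "s \<in> smono n x ` {\<delta> \<in> expset n. \<delta> = c \<or> prec \<delta> c}"
    then obtain \<delta> where d: "\<delta> \<in> expset n" "\<delta> = c \<or> prec \<delta> c" "s = smono n x \<delta>" by auto
    have 1: "unitv k + \<delta> = unitv k + c \<or> prec (unitv k + \<delta>) (unitv k + c)"
      using leq_compat[OF d(1) c uk d(2)] .
    have 2: "unitv k + \<delta> = \<Theta> \<or> prec (unitv k + \<delta>) \<Theta>"
      using leq_trans[OF expset_add[OF uk d(1)] expset_add[OF uk c] T 1 b] .
    have "x k * smono n x \<delta> \<in> F (unitv k + \<delta>)" using H k d(1) 2 unfolding Hyp_def by blast
    also have "\<dots> \<subseteq> F (unitv k + c)" using F_mono[OF expset_add[OF uk d(1)] expset_add[OF uk c] 1] .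
    finally show "x k * s \<in> F (unitv k + c)" using d(3) by simp
  qed
  then show ?thesis
    using span_lmul[OF r', of "x k" "smono n x ` {\<delta> \<in> expset n. \<delta> = unitv k + c \<or> prec \<delta> (unitv k + c)}"]
    unfolding F_def by blast
qed

lemma le_leq: "a \<in> expset n \<Longrightarrow> b \<in> expset n \<Longrightarrow> a \<le> b \<Longrightarrow> a = b \<or> prec a b"
  using le_prec[OF adm] by blast

lemma powmul:
  assumes H: "Hyp \<Theta>" and r: "r \<in> F c" and c: "c \<in> expset n" and k: "k < n" and T: "\<Theta> \<in> expset n"
  shows "ek k m + c = \<Theta> \<or> prec (ek k m + c) \<Theta> \<Longrightarrow> x k ^ m * r \<in> F (ek k m + c)"
proof (induction m)
  case 0
  have "ek k 0 = 0" by (simp add: ek_def fun_eq_iff)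
  then show ?case using r by simp
next
  case (Suc m)
  have e1: "ek k m + c \<in> expset n" "ek k (Suc m) + c \<in> expset n" using ek_expset[OF k] c by (auto intro: expset_add)
  have "ek k m + c \<le> ek k (Suc m) + c" by (auto simp: ek_def le_fun_def)
  then have "ek k m + c = ek k (Suc m) + c \<or> prec (ek k m + c) (ek k (Suc m) + c)" using le_leq e1 by blast
  then have b: "ek k m + c = \<Theta> \<or> prec (ek k m + c) \<Theta>" using leq_trans[OF e1 T _ Suc.prems] by blast
  have eq: "unitv k + (ek k m + c) = ek k (Suc m) + c" by (auto simp: unitv_def ek_def fun_eq_iff)
  have "x k * (x k ^ m * r) \<in> F (unitv k + (ek k m + c))"
    by (rule xmul[OF H Suc.IH[OF b] e1(1) k T]) (unfold eq, rule Suc.prems)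
  then have "x k * (x k ^ m * r) \<in> F (ek k (Suc m) + c)" by (simp only: eq)
  moreover have "x k ^ Suc m * r = x k * (x k ^ m * r)" by (simp add: mult.assoc)
  ultimately show ?case by (simp only:)
qed

lemma listmul:
  assumes H: "Hyp \<Theta>" and r: "r \<in> F c" and c: "c \<in> expset n" and T: "\<Theta> \<in> expset n"
  shows "set L \<subseteq> {..<n} \<Longrightarrow> sum_list (map (\<lambda>k. ek k (a k)) L) + c = \<Theta> \<or> prec (sum_list (map (\<lambda>k. ek k (a k)) L) + c) \<Theta> \<Longrightarrow>
     prod_list (map (\<lambda>k. x k ^ a k) L) * r \<in> F (sum_list (map (\<lambda>k. ek k (a k)) L) + c)"
proof (induction L)
  case Nil then show ?case using r by simp
next
  case (Cons k L)
  let ?S = "sum_list (map (\<lambda>k. ek k (a k)) L)"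
  have k: "k < n" using Cons.prems by auto
  have e1: "?S + c \<in> expset n" "ek k (a k) + (?S + c) \<in> expset n"
    using sum_list_ek_expset[of L n a] Cons.prems ek_expset[OF k] c by (auto intro!: expset_add)
  have "?S + c \<le> ek k (a k) + (?S + c)" by (auto simp: le_fun_def)
  then have "?S + c = ek k (a k) + (?S + c) \<or> prec (?S + c) (ek k (a k) + (?S + c))" using le_leq e1 by blast
  moreover have "ek k (a k) + (?S + c) = \<Theta> \<or> prec (ek k (a k) + (?S + c)) \<Theta>"
    using Cons.prems(2) by (simp only: list.map add.assoc sum_list.Cons)
  ultimately have b: "?S + c = \<Theta> \<or> prec (?S + c) \<Theta>"
    using leq_trans[OF e1 T] by blast
  have sL: "set L \<subseteq> {..<n}" using Cons.prems(1) by simp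
  have pre: "ek k (a k) + (?S + c) = \<Theta> \<or> prec (ek k (a k) + (?S + c)) \<Theta>"
    using Cons.prems(2) by (simp only: list.map add.assoc sum_list.Cons)
  have "x k ^ a k * (prod_list (map (\<lambda>k. x k ^ a k) L) * r) \<in> F (ek k (a k) + (?S + c))"
    by (rule powmul[OF H Cons.IH[OF sL b] e1(1) k T pre])
  then show ?case by (simp only: list.map prod_list.Cons sum_list.Cons mult.assoc add.assoc)
qed

lemma monomul:
  assumes H: "Hyp \<Theta>" and r: "r \<in> F c" and c: "c \<in> expset n" and T: "\<Theta> \<in> expset n" and a: "a \<in> expset n"
    and b: "a + c = \<Theta> \<or> prec (a + c) \<Theta>"
  shows "smono n x a * r \<in> F (a + c)"
proof -
  have s: "sum_list (map (\<lambda>k. ek k (a k)) [0..<n]) = a"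
    using a unfolding sum_list_ek_upt expset_def by (auto simp: fun_eq_iff)
  have L: "set [0..<n] \<subseteq> {..<n}" by auto
  show ?thesis
    using listmul[OF H r c T, where L="[0..<n]" and a=a, OF L] b unfolding s smono_def by blast
qed

end


context pbwl
begin

lemma F_span_add: "a \<in> F g \<Longrightarrow> b \<in> F g \<Longrightarrow> a + b \<in> F g"
  unfolding F_def by (rule vs.span_add)
lemma F_span_scale: "a \<in> F g \<Longrightarrow> scale c a \<in> F g"
  unfolding F_def by (rule vs.span_scale)

lemma C_gen:
  "\<forall>i \<beta>. i < n \<longrightarrow> \<beta> \<in> expset n \<longrightarrow> unitv i + \<beta> = \<Gamma> \<longrightarrow> x i * smono n x \<beta> \<in> F \<Gamma>"
proof (induction \<Gamma> rule: wf_induct[OF adm_wf[OF adm]])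
  case (1 \<Gamma>)
  have IHc: "\<And>k \<gamma>. k < n \<Longrightarrow> \<gamma> \<in> expset n \<Longrightarrow> \<Gamma> \<in> expset n \<Longrightarrow> prec (unitv k + \<gamma>) \<Gamma> \<Longrightarrow>
      x k * smono n x \<gamma> \<in> F (unitv k + \<gamma>)"
  proof -
    fix k \<gamma> assume k: "k < n" "\<gamma> \<in> expset n" "\<Gamma> \<in> expset n" "prec (unitv k + \<gamma>) \<Gamma>"
    have "unitv k + \<gamma> \<in> expset n" using k by (auto intro: expset_add unitv_expset)
    then show "x k * smono n x \<gamma> \<in> F (unitv k + \<gamma>)" using 1 k by blast
  qed
  show ?case
  proof (intro allI impI)
    fix i \<beta> assume i: "i < n" and \<beta>: "\<beta> \<in> expset n" and G: "unitv i + \<beta> = \<Gamma>"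
    have Ge: "\<Gamma> \<in> expset n" using G i \<beta> by (auto intro: expset_add unitv_expset)
    have HypT: "Hyp \<Theta>" if T: "\<Theta> \<in> expset n" "prec \<Theta> \<Gamma>" for \<Theta>
      unfolding Hyp_def
    proof (intro allI impI)
      fix k \<gamma> assume k: "k < n" "\<gamma> \<in> expset n" "unitv k + \<gamma> = \<Theta> \<or> prec (unitv k + \<gamma>) \<Theta>"
      have "unitv k + \<gamma> \<in> expset n" using k by (auto intro: expset_add unitv_expset)
      then have "prec (unitv k + \<gamma>) \<Gamma>" using k(3) T Ge trans by blast
      then show "x k * smono n x \<gamma> \<in> F (unitv k + \<gamma>)" using IHc k Ge by blast
    qed
    show "x i * smono n x \<beta> \<in> F \<Gamma>"
    proof (cases "\<forall>k<i. \<beta> k = 0")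
      case True
      then show ?thesis using smono_insert[OF i True] F_base[OF Ge] G by simp
    next
      case False
      then obtain k0 where k0: "k0 < i" "\<beta> k0 \<noteq> 0" by auto
      define j where "j = (LEAST k. \<beta> k \<noteq> 0)"
      have bj: "\<beta> j \<noteq> 0" unfolding j_def by (rule LeastI[of "\<lambda>k. \<beta> k \<noteq> 0", OF k0(2)])
      have "j \<le> k0" unfolding j_def by (rule Least_le[of "\<lambda>k. \<beta> k \<noteq> 0", OF k0(2)])
      then have ji: "j < i" and jn: "j < n" using k0 i by auto
      have b0: "\<forall>k<j. \<beta> k = 0" unfolding j_def using not_less_Least[of _ "\<lambda>k. \<beta> k \<noteq> 0"] by blast
      define \<beta>' where "\<beta>' = \<beta> - unitv j"
      have b'e: "\<beta>' \<in> expset n" using \<beta> unfolding \<beta>'_def expset_def by auto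
      have beq: "\<beta> = unitv j + \<beta>'" using bj unfolding \<beta>'_def by (auto simp: fun_eq_iff unitv_def)
      have b'0: "\<forall>k<j. \<beta>' k = 0" using b0 unfolding \<beta>'_def by auto
      have sb: "smono n x \<beta> = x j * smono n x \<beta>'" using smono_insert[OF jn b'0] beq by simp
      obtain q p where qp: "p \<in> vs.span (smono n x ` {\<gamma>\<in>expset n. prec \<gamma> (unitv j + unitv i)})"
          "x i * x j = scale q (x j * x i) + p"
        using rel[OF ji i] by blast
      have eq: "x i * smono n x \<beta> = scale q (x j * (x i * smono n x \<beta>')) + p * smono n x \<beta>'"
      proof -
        have "x i * smono n x \<beta> = (x i * x j) * smono n x \<beta>'" by (simp add: sb mult.assoc)
        also have "\<dots> = scale q (x j * x i) * smono n x \<beta>' + p * smono n x \<beta>'"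
          by (simp add: qp(2) distrib_right)
        also have "scale q (x j * x i) * smono n x \<beta>' = scale q (x j * (x i * smono n x \<beta>'))"
          by (simp add: scale_ml[symmetric] mult.assoc)
        finally show ?thesis .
      qed
      define \<Gamma>1 where "\<Gamma>1 = unitv i + \<beta>'"
      have G1e: "\<Gamma>1 \<in> expset n" unfolding \<Gamma>1_def using i b'e by (auto intro: expset_add unitv_expset)
      have GG: "\<Gamma> = \<Gamma>1 + unitv j" unfolding \<Gamma>1_def G[symmetric] beq by (simp add: ac_simps)
      have uje: "unitv j \<in> expset n" using jn by (rule unitv_expset)
      have "unitv j \<noteq> 0" by (auto simp: unitv_def fun_eq_iff)
      then have p0: "prec 0 (unitv j)"
        using adm uje adm_not0[OF adm uje] unfolding admissible_def by (metis expset_zero)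
      have pG1: "prec \<Gamma>1 \<Gamma>" using compat[OF expset_zero uje G1e p0] GG by simp
      have r1: "x i * smono n x \<beta>' \<in> F \<Gamma>1"
        using IHc[OF i b'e Ge] pG1 unfolding \<Gamma>1_def by blast
      have part1: "x j * (x i * smono n x \<beta>') \<in> F \<Gamma>"
      proof -
        have "\<forall>s\<in>smono n x ` {\<delta> \<in> expset n. \<delta> = \<Gamma>1 \<or> prec \<delta> \<Gamma>1}. x j * s \<in> F \<Gamma>"
        proof
          fix s assume "s \<in> smono n x ` {\<delta> \<in> expset n. \<delta> = \<Gamma>1 \<or> prec \<delta> \<Gamma>1}"
          then obtain \<delta> where d: "\<delta> \<in> expset n" "\<delta> = \<Gamma>1 \<or> prec \<delta> \<Gamma>1" "s = smono n x \<delta>" by auto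
          show "x j * s \<in> F \<Gamma>"
          proof (cases "\<delta> = \<Gamma>1")
            case True
            have "\<forall>k<j. \<Gamma>1 k = 0" unfolding \<Gamma>1_def using b'0 ji by (auto simp: unitv_def)
            then have "x j * smono n x \<Gamma>1 = smono n x (unitv j + \<Gamma>1)" by (rule smono_insert[OF jn])
            also have "unitv j + \<Gamma>1 = \<Gamma>" using GG by (simp add: add.commute)
            finally show ?thesis using d(3) True F_base[OF Ge] by simp
          next
            case False
            then have "prec \<delta> \<Gamma>1" using d by simp
            then have "prec (unitv j + \<delta>) (unitv j + \<Gamma>1)" by (rule compat[OF d(1) G1e uje])
            then have pp: "prec (unitv j + \<delta>) \<Gamma>" using GG by (simp add: add.commute)
            have "x j * smono n x \<delta> \<in> F (unitv j + \<delta>)" by (rule IHc[OF jn d(1) Ge pp])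
            also have "\<dots> \<subseteq> F \<Gamma>" using F_mono[OF expset_add[OF uje d(1)] Ge] pp by blast
            finally show ?thesis using d(3) by simp
          qed
        qed
        then show ?thesis using span_lmul[of "x i * smono n x \<beta>'" _ "x j"] r1 unfolding F_def by blast
      qed
      have part2: "p * smono n x \<beta>' \<in> F \<Gamma>"
      proof -
        have "\<forall>s\<in>smono n x ` {\<gamma>\<in>expset n. prec \<gamma> (unitv j + unitv i)}. s * smono n x \<beta>' \<in> F \<Gamma>"
        proof
          fix s assume "s \<in> smono n x ` {\<gamma>\<in>expset n. prec \<gamma> (unitv j + unitv i)}"
          then obtain \<gamma> where g: "\<gamma> \<in> expset n" "prec \<gamma> (unitv j + unitv i)" "s = smono n x \<gamma>" by auto
          have uij: "unitv j + unitv i \<in> expset n" using uje i by (auto intro: expset_add unitv_expset)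
          have "prec (\<beta>' + \<gamma>) (\<beta>' + (unitv j + unitv i))" by (rule compat[OF g(1) uij b'e g(2)])
          moreover have "\<beta>' + (unitv j + unitv i) = \<Gamma>" unfolding G[symmetric] beq by (simp add: ac_simps)
          ultimately have pT: "prec (\<gamma> + \<beta>') \<Gamma>" by (simp add: add.commute)
          have Te: "\<gamma> + \<beta>' \<in> expset n" using g(1) b'e by (rule expset_add)
          have "smono n x \<gamma> * smono n x \<beta>' \<in> F (\<gamma> + \<beta>')"
            by (rule monomul[OF HypT[OF Te pT] F_base[OF b'e] b'e Te g(1)]) simp
          also have "\<dots> \<subseteq> F \<Gamma>" using F_mono[OF Te Ge] pT by blast
          finally show "s * smono n x \<beta>' \<in> F \<Gamma>" using g(3) by simp
        qed
        then show ?thesis using span_rmul[of p _ "smono n x \<beta>'"] qp(1) unfolding F_def by blast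
      qed
      show ?thesis unfolding eq by (intro F_span_add F_span_scale part1 part2)
    qed
  qed
qed

lemma C: "i < n \<Longrightarrow> \<beta> \<in> expset n \<Longrightarrow> x i * smono n x \<beta> \<in> F (unitv i + \<beta>)"
  using C_gen by blast

lemma Hyp_all: "Hyp \<Theta>"
  unfolding Hyp_def using C by blast

lemma prod_F:
  assumes a: "a \<in> expset n" and c: "c \<in> expset n"
  shows "smono n x a * smono n x c \<in> F (a + c)"
  using monomul[OF Hyp_all[of "a + c"] F_base[OF c] c expset_add[OF a c] a] by simp

lemma coeff_F:
  assumes r: "r \<in> F \<gamma>" and d: "\<delta> \<in> expset n" and nz: "coeffR scale n x r \<delta> \<noteq> 0"
  shows "\<delta> = \<gamma> \<or> prec \<delta> \<gamma>"
proof -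
  let ?B' = "smono n x ` {\<delta> \<in> expset n. \<delta> = \<gamma> \<or> prec \<delta> \<gamma>}"
  have sub: "?B' \<subseteq> smono n x ` expset n" by auto
  have "vs.representation (smono n x ` expset n) r = vs.representation ?B' r"
    by (rule vs.representation_extend[OF indep _ sub]) (use r in \<open>simp add: F_def\<close>)
  then have "vs.representation ?B' r (smono n x \<delta>) \<noteq> 0" using nz unfolding coeffR_def by simp
  then have "smono n x \<delta> \<in> ?B'" by (rule vs.representation_ne_zero)
  then obtain \<delta>' where "\<delta>' \<in> expset n" "\<delta>' = \<gamma> \<or> prec \<delta>' \<gamma>" "smono n x \<delta> = smono n x \<delta>'" by auto
  moreover then have "\<delta> = \<delta>'" using smono_inj d unfolding inj_on_def by blast
  ultimately show ?thesis by simp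
qed

end


lemma exp_env_max:
  assumes ev: "env_vec n s h" and nz: "h \<noteq> (\<lambda>_. 0)" and so: "sto ord (expset n \<times> expset n)"
    and e: "exp_env use_top ord h = m"
  shows "h m \<noteq> 0 \<and> (\<forall>p. h p \<noteq> 0 \<longrightarrow> p \<noteq> m \<longrightarrow> mod_ord use_top ord p m)"
proof -
  have fin: "finite {p. h p \<noteq> 0}" using ev unfolding env_vec_def by blast
  have ne: "{p. h p \<noteq> 0} \<noteq> {}" using nz by auto
  have sub: "{p. h p \<noteq> 0} \<subseteq> (expset n \<times> expset n) \<times> UNIV"
  proof
    fix p assume "p \<in> {p. h p \<noteq> 0}"
    then obtain a b i where "p = ((a, b), i)" "h ((a, b), i) \<noteq> 0" by (metis mem_Collect_eq prod.collapse)
    then show "p \<in> (expset n \<times> expset n) \<times> UNIV" using ev unfolding env_vec_def by auto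
  qed
  show ?thesis using max_wrt_prop[OF fin ne sto_mod_ord[OF so] sub] e unfolding exp_env_def by auto
qed

lemma smono_zero: "smono n x 0 = 1"
  unfolding smono_def by (rule prod_list_one) simp

context pbwl
begin

lemma coeff_smono:
  assumes "\<gamma> \<in> expset n" "\<delta> \<in> expset n"
  shows "coeffR scale n x (smono n x \<gamma>) \<delta> = (if \<delta> = \<gamma> then 1 else 0)"
proof -
  have "coeffR scale n x (smono n x \<gamma>) \<delta> = (if smono n x \<delta> = smono n x \<gamma> then 1 else 0)"
    unfolding coeffR_def using vs.representation_basis[OF indep, of "smono n x \<gamma>"] assms by auto
  also have "(smono n x \<delta> = smono n x \<gamma>) = (\<delta> = \<gamma>)" using smono_inj assms unfolding inj_on_def by blast
  finally show ?thesis .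
qed

lemma coeff_sum:
  assumes "finite T"
  shows "coeffR scale n x (\<Sum>t\<in>T. scale (c t) (g t)) \<delta> = (\<Sum>t\<in>T. c t * coeffR scale n x (g t) \<delta>)"
  unfolding coeffR_def
  by (simp add: vs.representation_sum[OF indep] vs.representation_scale[OF indep] spanU)

lemma coeff_zero: "coeffR scale n x 0 \<delta> = 0"
  unfolding coeffR_def by (simp add: vs.representation_zero)

lemma final:
  assumes ev: "env_vec n s h" and h0: "h ((a0, b0), i) \<noteq> 0"
    and mx: "\<forall>p. h p \<noteq> 0 \<longrightarrow> p \<noteq> ((a0, b0), i) \<longrightarrow> mod_ord use_top ord p ((a0, b0), i)"
    and key: "\<forall>a b. a \<in> expset n \<longrightarrow> b \<in> expset n \<longrightarrow> ord (a, b) (a0, b0) \<longrightarrow> prec (a + opx n b) \<tau>"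
    and mono0: "smono n x a0 * smono n x (opx n b0) = smono n x \<tau>"
    and tau: "a0 + opx n b0 = \<tau>"
  shows "mult_s scale n x h \<noteq> (\<lambda>_. 0) \<and> exp_R use_top scale n x prec s (mult_s scale n x h) = (\<tau>, i)"
proof -
  let ?v = "mult_s scale n x h"
  let ?P = "\<lambda>ab. smono n x (fst ab) * smono n x (opx n (snd ab))"
  let ?L = "\<lambda>ab. fst ab + opx n (snd ab)"
  let ?T = "\<lambda>j. {ab. h (ab, j) \<noteq> 0}"
  have ab0e: "a0 \<in> expset n" "b0 \<in> expset n" "i \<in> {1..s}" using ev h0 unfolding env_vec_def by auto
  have te: "\<tau> \<in> expset n" using ab0e tau by (auto intro: expset_add opx_expset)
  have Tmem: "fst ab \<in> expset n \<and> snd ab \<in> expset n \<and> j \<in> {1..s}" if "ab \<in> ?T j" for ab j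
    using that ev unfolding env_vec_def by (cases ab) auto
  have Le: "?L ab \<in> expset n" if "ab \<in> ?T j" for ab j
    using Tmem[OF that] by (auto intro: expset_add opx_expset)
  have finT: "finite (?T j)" for j
  proof -
    have "?T j = (\<lambda>ab. (ab, j)) -` {p. h p \<noteq> 0}" by auto
    moreover have "finite ((\<lambda>ab. (ab, j)) -` {p. h p \<noteq> 0})"
      using ev unfolding env_vec_def by (intro finite_vimageI) (auto simp: inj_on_def)
    ultimately show ?thesis by simp
  qed
  have cv: "coeffR scale n x (?v j) \<delta> = (\<Sum>ab\<in>?T j. h (ab, j) * coeffR scale n x (?P ab) \<delta>)" for j \<delta>
    unfolding mult_s_def by (rule coeff_sum[OF finT])
  have Lc: "\<delta> = ?L ab \<or> prec \<delta> (?L ab)"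
    if "ab \<in> ?T j" "\<delta> \<in> expset n" "coeffR scale n x (?P ab) \<delta> \<noteq> 0" for ab j \<delta>
  proof -
    have "?P ab \<in> F (?L ab)" using Tmem[OF that(1)] by (auto intro!: prod_F opx_expset)
    then show ?thesis using coeff_F that(2,3) by blast
  qed
  have ordk: "prec (?L ab) \<tau>" if "ab \<in> ?T j" "ord ab (a0, b0)" for ab j
    using key Tmem[OF that(1)] that(2) by (cases ab) auto
  have c1: "coeffR scale n x (?v i) \<tau> = h ((a0, b0), i)"
  proof -
    have mem: "(a0, b0) \<in> ?T i" using h0 by simp
    have "coeffR scale n x (?v i) \<tau> = h ((a0, b0), i) * coeffR scale n x (?P (a0, b0)) \<tau>
        + (\<Sum>ab\<in>?T i - {(a0, b0)}. h (ab, i) * coeffR scale n x (?P ab) \<tau>)"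
      unfolding cv by (rule sum.remove[OF finT mem])
    also have "coeffR scale n x (?P (a0, b0)) \<tau> = 1" using mono0 coeff_smono[OF te te] by simp
    also have "(\<Sum>ab\<in>?T i - {(a0, b0)}. h (ab, i) * coeffR scale n x (?P ab) \<tau>) = 0"
    proof (rule sum.neutral, rule ballI)
      fix ab assume ab: "ab \<in> ?T i - {(a0, b0)}"
      then have "h (ab, i) \<noteq> 0" "(ab, i) \<noteq> ((a0, b0), i)" by auto
      then have "mod_ord use_top ord (ab, i) ((a0, b0), i)" using mx by blast
      then have "ord ab (a0, b0)" unfolding mod_ord_def top_ord_def pot_ord_def using ab
        by (auto split: if_splits)
      then have pl: "prec (?L ab) \<tau>" using ordk ab by blast
      have "coeffR scale n x (?P ab) \<tau> = 0"
      proof (rule ccontr)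
        assume "coeffR scale n x (?P ab) \<tau> \<noteq> 0"
        then have "\<tau> = ?L ab \<or> prec \<tau> (?L ab)" using Lc ab te by blast
        then show False using pl irrefl trans te Le ab by blast
      qed
      then show "h (ab, i) * coeffR scale n x (?P ab) \<tau> = 0" by simp
    qed
    finally show ?thesis by simp
  qed
  have c2: "mod_ord use_top prec (\<delta>, j) (\<tau>, i)"
    if d: "\<delta> \<in> expset n" "coeffR scale n x (?v j) \<delta> \<noteq> 0" "(\<delta>, j) \<noteq> (\<tau>, i)" for \<delta> j
  proof -
    obtain ab where ab: "ab \<in> ?T j" "h (ab, j) * coeffR scale n x (?P ab) \<delta> \<noteq> 0"
      using d(2) unfolding cv by (meson sum.not_neutral_contains_not_neutral)
    then have "coeffR scale n x (?P ab) \<delta> \<noteq> 0" by auto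
    then have dl: "\<delta> = ?L ab \<or> prec \<delta> (?L ab)" using Lc ab(1) d(1) by blast
    show ?thesis
    proof (cases "(ab, j) = ((a0, b0), i)")
      case True
      then have "?L ab = \<tau>" "j = i" using tau by auto
      then have "prec \<delta> \<tau>" using dl d(3) by auto
      then show ?thesis using \<open>j = i\<close> unfolding mod_ord_def top_ord_def pot_ord_def by auto
    next
      case False
      moreover have "h (ab, j) \<noteq> 0" using ab(1) by simp
      ultimately have mo: "mod_ord use_top ord (ab, j) ((a0, b0), i)" using mx by blast
      have pd: "prec \<delta> \<tau>" if "ord ab (a0, b0)"
      proof -
        have "prec (?L ab) \<tau>" using ordk[OF ab(1) that] .
        then show ?thesis using dl trans d(1) Le[OF ab(1)] te by blast
      qed
      show ?thesis
      proof (cases use_top)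
        case True
        then have "ord ab (a0, b0) \<or> (ab = (a0, b0) \<and> j > i)" using mo unfolding mod_ord_def top_ord_def by auto
        then show ?thesis
        proof
          assume "ord ab (a0, b0)" then show ?thesis using pd True unfolding mod_ord_def top_ord_def by auto
        next
          assume "ab = (a0, b0) \<and> j > i"
          then have "\<delta> = \<tau> \<or> prec \<delta> \<tau>" using dl tau by auto
          then show ?thesis using True \<open>ab = (a0, b0) \<and> j > i\<close> unfolding mod_ord_def top_ord_def by auto
        qed
      next
        case False
        then have "j > i \<or> (j = i \<and> ord ab (a0, b0))" using mo unfolding mod_ord_def pot_ord_def by auto
        then show ?thesis using pd False unfolding mod_ord_def pot_ord_def by auto
      qed
    qed
  qed
  let ?S = "{(\<alpha>, j). \<alpha> \<in> expset n \<and> j \<in> {1..s} \<and> coeffR scale n x (?v j) \<alpha> \<noteq> 0}"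
  have "max_wrt (mod_ord use_top prec) ?S = (\<tau>, i)"
  proof (rule max_wrt_eq[OF sto_mod_ord[OF st]])
    show "?S \<subseteq> expset n \<times> UNIV" by auto
    show "(\<tau>, i) \<in> ?S" using te ab0e c1 h0 by auto
    show "\<forall>y\<in>?S. y \<noteq> (\<tau>, i) \<longrightarrow> mod_ord use_top prec y (\<tau>, i)" using c2 by auto
  qed
  moreover have "?v \<noteq> (\<lambda>_. 0)"
  proof
    assume "?v = (\<lambda>_. 0)"
    then have "coeffR scale n x (?v i) \<tau> = 0" using coeff_zero by simp
    then show False using c1 h0 by simp
  qed
  ultimately show ?thesis unfolding exp_R_def by simp
qed

end


theorem mainTheorem5:
  fixes scale :: "'k::field \<Rightarrow> 'r::ring_1 \<Rightarrow> 'r"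
    and n s :: nat and x :: "nat \<Rightarrow> 'r"
    and prec :: "(nat \<Rightarrow> nat) \<Rightarrow> (nat \<Rightarrow> nat) \<Rightarrow> bool"
    and use_top :: bool
  assumes pbw: "pbw_algebra scale n x prec"
  shows
   "(\<forall>ord \<in> {ord_upper_star n prec, ord_upper_c n prec}.
      \<forall>(h :: exp2 \<times> nat \<Rightarrow> 'k) \<alpha> i.
        env_vec n s h \<and> h \<noteq> (\<lambda>_. 0) \<and> exp_env use_top ord h = ((\<alpha>, 0), i) \<longrightarrow>
        mult_s scale n x h \<noteq> (\<lambda>_. 0) \<and>
        exp_R use_top scale n x prec s (mult_s scale n x h) = (\<alpha>, i)) \<and>
    (\<forall>ord \<in> {ord_lower_star n prec, ord_lower_c n prec}.
      \<forall>(h :: exp2 \<times> nat \<Rightarrow> 'k) \<alpha> i.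
        env_vec n s h \<and> h \<noteq> (\<lambda>_. 0) \<and> exp_env use_top ord h = ((0, \<alpha>), i) \<longrightarrow>
        mult_s scale n x h \<noteq> (\<lambda>_. 0) \<and>
        exp_R use_top scale n x prec s (mult_s scale n x h) = (opx n \<alpha>, i))"
proof -
  interpret pbwl scale n x prec by (rule pbwl.intro[OF pbw])
  have A: "mult_s scale n x h \<noteq> (\<lambda>_. 0) \<and> exp_R use_top scale n x prec s (mult_s scale n x h) = (\<alpha>, i)"
    if so: "sto ord (expset n \<times> expset n)"
      and key: "\<forall>a b. a \<in> expset n \<longrightarrow> b \<in> expset n \<longrightarrow> ord (a, b) (\<alpha>, 0) \<longrightarrow> prec (a + opx n b) \<alpha>"
      and hyp: "env_vec n s h \<and> h \<noteq> (\<lambda>_. 0) \<and> exp_env use_top ord h = ((\<alpha>, 0), i)"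
    for ord and h :: "exp2 \<times> nat \<Rightarrow> 'k" and \<alpha> i
  proof -
    have m: "h ((\<alpha>, 0), i) \<noteq> 0 \<and> (\<forall>p. h p \<noteq> 0 \<longrightarrow> p \<noteq> ((\<alpha>, 0), i) \<longrightarrow> mod_ord use_top ord p ((\<alpha>, 0), i))"
      using exp_env_max[OF _ _ so] hyp by blast
    show ?thesis
      by (rule final[of s h \<alpha> 0 i use_top ord \<alpha>]) (use hyp m key in \<open>simp_all add: smono_zero\<close>)
  qed
  have B: "mult_s scale n x h \<noteq> (\<lambda>_. 0) \<and> exp_R use_top scale n x prec s (mult_s scale n x h) = (opx n \<alpha>, i)"
    if so: "sto ord (expset n \<times> expset n)"
      and key: "\<forall>a b. a \<in> expset n \<longrightarrow> b \<in> expset n \<longrightarrow> ord (a, b) (0, \<alpha>) \<longrightarrow> prec (a + opx n b) (opx n \<alpha>)"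
      and hyp: "env_vec n s h \<and> h \<noteq> (\<lambda>_. 0) \<and> exp_env use_top ord h = ((0, \<alpha>), i)"
    for ord and h :: "exp2 \<times> nat \<Rightarrow> 'k" and \<alpha> i
  proof -
    have m: "h ((0, \<alpha>), i) \<noteq> 0 \<and> (\<forall>p. h p \<noteq> 0 \<longrightarrow> p \<noteq> ((0, \<alpha>), i) \<longrightarrow> mod_ord use_top ord p ((0, \<alpha>), i))"
      using exp_env_max[OF _ _ so] hyp by blast
    show ?thesis
      by (rule final[of s h 0 \<alpha> i use_top ord "opx n \<alpha>"]) (use hyp m key in \<open>simp_all add: smono_zero\<close>)
  qed
  have k1: "\<forall>a b. a \<in> expset n \<longrightarrow> b \<in> expset n \<longrightarrow> ord_upper_star n prec (a, b) (\<alpha>, 0) \<longrightarrow> prec (a + opx n b) \<alpha>" for \<alpha>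
    using key_upper_star[OF adm] by fastforce
  have k2: "\<forall>a b. a \<in> expset n \<longrightarrow> b \<in> expset n \<longrightarrow> ord_upper_c n prec (a, b) (\<alpha>, 0) \<longrightarrow> prec (a + opx n b) \<alpha>" for \<alpha>
    using key_upper_c[OF adm] by fastforce
  have k3: "\<forall>a b. a \<in> expset n \<longrightarrow> b \<in> expset n \<longrightarrow> ord_lower_star n prec (a, b) (0, \<alpha>) \<longrightarrow> prec (a + opx n b) (opx n \<alpha>)" for \<alpha>
    using key_lower_star[OF adm] by fastforce
  have k4: "\<forall>a b. a \<in> expset n \<longrightarrow> b \<in> expset n \<longrightarrow> ord_lower_c n prec (a, b) (0, \<alpha>) \<longrightarrow> prec (a + opx n b) (opx n \<alpha>)" for \<alpha>
    using key_lower_c[OF adm] by fastforce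
  show ?thesis
    using A[OF sto_upper_star[OF adm] k1] A[OF sto_upper_c[OF adm] k2]
      B[OF sto_lower_star[OF adm] k3] B[OF sto_lower_c[OF adm] k4]
    by blast
qed


end
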